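(* Let $p\in[1,\infty)$, let $X_1,X_2$ be Polish spaces, let $c:X_1\times X_2\to[0,\infty)$ be continuous, let $\mu_i\in\mathcal P_p(X_i)$, let $q>1$, and let $\varepsilon_k>0$ with $\varepsilon_k\to0$. Define $F_k,F:\mathcal P_p(X_1\times X_2)\to\mathbb R\cup\{\infty\}$ by $F_k(\pi)=\int c\,d\pi+\varepsilon_k D_q(\pi,\mu_1\otimes\mu_2)$ and $F(\pi)=\int c\,d\pi$ if $\pi\in\Pi(\mu_1,\mu_2)$, and $F_k(\pi)=F(\pi)=+\infty$ otherwise. Then for any sequence $(\pi_k)_{k\in\mathbb N}\subset\mathcal P_p(X_1\times X_2)$ with $\pi_k\to\pi$ narrowly, $$F(\pi)\le\liminf_{k\to\infty}F_k(\pi_k).$$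
   Context: $\mathcal P_p(X)$ is the set of probability measures with finite $p$-th moment and $\Pi(\mu_1,\mu_2)$ the set of couplings. The Tsallis relative entropy is $D_q(\mu,\nu)=\frac{1}{q-1}\int\big[(\frac{d\mu}{d\nu})^q-\frac{d\mu}{d\nu}\big]\,d\nu$ if $\mu\ll\nu$ and $q>1$, $+\infty$ otherwise. *)

theory Defs
  imports "HOL-Probability.Probability"
begin

definition Pp :: "real \<Rightarrow> 'a::metric_space measure set" where
  "Pp p = {M. prob_space M \<and> sets M = sets borel \<and>
      (\<exists>x0. (\<integral>\<^sup>+x. ennreal (dist x0 x powr p) \<partial>M) < \<infinity>)}"

definition couplings :: "'a::topological_space measure \<Rightarrow> 'b::topological_space measure \<Rightarrow> ('a \<times> 'b) measure set" where
  "couplings mu1 mu2 = {pm. prob_space pm \<and> sets pm = sets borel \<and>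
      distr pm mu1 fst = mu1 \<and> distr pm mu2 snd = mu2}"

definition ext_integral :: "'a measure \<Rightarrow> ('a \<Rightarrow> real) \<Rightarrow> ereal" where
  "ext_integral M g = enn2ereal (\<integral>\<^sup>+x. ennreal (g x) \<partial>M) - enn2ereal (\<integral>\<^sup>+x. ennreal (- g x) \<partial>M)"

definition tsallis :: "real \<Rightarrow> 'a measure \<Rightarrow> 'a measure \<Rightarrow> ereal" where
  "tsallis q mu nu =
    (if q > 1 \<and> absolutely_continuous nu mu then
       ereal (1 / (q - 1)) *
         ext_integral nu (\<lambda>x. (enn2real (RN_deriv nu mu x)) powr q - enn2real (RN_deriv nu mu x))
     else \<infinity>)"

definition narrow_conv :: "(nat \<Rightarrow> 'a::topological_space measure) \<Rightarrow> 'a measure \<Rightarrow> bool" where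
  "narrow_conv P Q \<longleftrightarrow> (\<forall>f :: 'a \<Rightarrow> real. continuous_on UNIV f \<and> bounded (range f) \<longrightarrow>
      (\<lambda>k. \<integral>x. f x \<partial>(P k)) \<longlonglongrightarrow> (\<integral>x. f x \<partial>Q))"

definition Fk :: "(('a \<times> 'b) \<Rightarrow> real) \<Rightarrow> real \<Rightarrow> real \<Rightarrow> 'a::topological_space measure \<Rightarrow> 'b::topological_space measure
    \<Rightarrow> ('a \<times> 'b) measure \<Rightarrow> ereal" where
  "Fk c q eps mu1 mu2 pm =
    (if pm \<in> couplings mu1 mu2
     then enn2ereal (\<integral>\<^sup>+z. ennreal (c z) \<partial>pm) + ereal eps * tsallis q pm (mu1 \<Otimes>\<^sub>M mu2)
     else \<infinity>)"

definition Fzero :: "(('a \<times> 'b) \<Rightarrow> real) \<Rightarrow> 'a::topological_space measure \<Rightarrow> 'b::topological_space measure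
    \<Rightarrow> ('a \<times> 'b) measure \<Rightarrow> ereal" where
  "Fzero c mu1 mu2 pm =
    (if pm \<in> couplings mu1 mu2 then enn2ereal (\<integral>\<^sup>+z. ennreal (c z) \<partial>pm) else \<infinity>)"

end

theory Submission
  imports Defs
begin

lemma powr_tangent:
  fixes y q :: real assumes "y \<ge> 0" "q > 1"
  shows "y powr q - y \<ge> (q - 1) * (y - 1)"
proof (cases "y = 0")
  case True then show ?thesis using assms by simp
next
  case False
  then have y: "y > 0" using assms by simp
  have "convex_on {0<..} (\<lambda>x. x powr q)" using powr_convex[of q] assms by simp
  then have "y powr q - 1 powr q \<ge> (q * 1 powr (q - 1)) * (y - 1)"
    apply (rule convex_on_imp_above_tangent)
    using y by (auto intro!: derivative_eq_intros simp: interior_open)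
  then show ?thesis by (simp add: algebra_simps)
qed

lemma tsallis_nonneg:
  assumes mu: "prob_space mu" and nu: "prob_space nu" and S: "sets mu = sets nu"
  shows "tsallis q mu nu \<ge> 0"
proof (cases "q > 1 \<and> absolutely_continuous nu mu")
  case False then show ?thesis unfolding tsallis_def by (simp only: if_False) simp
next
  case True
  then have q: "q > 1" and ac: "absolutely_continuous nu mu" by auto
  interpret mu: prob_space mu by fact
  interpret nu: prob_space nu by fact
  define f where "f x = enn2real (RN_deriv nu mu x)" for x
  have fm[measurable]: "f \<in> borel_measurable nu" unfolding f_def by measurable
  have f0: "f x \<ge> 0" for x by (simp add: f_def)
  have D: "density nu (RN_deriv nu mu) = mu"
    using nu.density_RN_deriv[OF ac] S by simp
  have "emeasure (density nu (RN_deriv nu mu)) (space nu) = (\<integral>\<^sup>+x. RN_deriv nu mu x * indicator (space nu) x \<partial>nu)"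
    by (rule emeasure_density) auto
  also have "\<dots> = (\<integral>\<^sup>+x. RN_deriv nu mu x \<partial>nu)"
    by (rule nn_integral_cong) simp
  finally have "(\<integral>\<^sup>+x. RN_deriv nu mu x \<partial>nu) = 1"
    using D mu.emeasure_space_1 sets_eq_imp_space_eq[OF S] by simp
  moreover have "AE x in nu. RN_deriv nu mu x \<noteq> \<infinity>"
    using nu.RN_deriv_finite[OF _ ac] S mu.sigma_finite_measure by simp
  then have "(\<integral>\<^sup>+x. ennreal (f x) \<partial>nu) = (\<integral>\<^sup>+x. RN_deriv nu mu x \<partial>nu)"
    unfolding f_def by (intro nn_integral_cong_AE) (auto simp: ennreal_enn2real_if)
  ultimately have I1: "(\<integral>\<^sup>+x. ennreal (f x) \<partial>nu) = 1" by simp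
  define a where "a = (\<integral>\<^sup>+x. ennreal (f x - 1) \<partial>nu)"
  define b where "b = (\<integral>\<^sup>+x. ennreal (1 - f x) \<partial>nu)"
  have "a + 1 = (\<integral>\<^sup>+x. ennreal (f x - 1) + 1 \<partial>nu)"
    unfolding a_def by (subst nn_integral_add) (auto simp: nu.emeasure_space_1)
  also have "\<dots> = (\<integral>\<^sup>+x. ennreal (1 - f x) + ennreal (f x) \<partial>nu)"
  proof (rule nn_integral_cong)
    fix x
    show "ennreal (f x - 1) + 1 = ennreal (1 - f x) + ennreal (f x)"
    proof (cases "f x \<ge> 1")
      case True
      then have "ennreal (1 - f x) = 0" by (intro ennreal_neg) simp
      moreover have "ennreal (f x - 1) + ennreal 1 = ennreal (f x)"
        using True by (subst ennreal_plus[symmetric]) auto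
      ultimately show ?thesis by simp
    next
      case False
      then have "ennreal (f x - 1) = 0" by (intro ennreal_neg) simp
      moreover have "ennreal (1 - f x) + ennreal (f x) = ennreal 1"
        using False f0[of x] by (subst ennreal_plus[symmetric]) auto
      ultimately show ?thesis by simp
    qed
  qed
  also have "\<dots> = b + 1" unfolding b_def I1[symmetric] by (subst nn_integral_add) auto
  finally have ab: "a = b" by (simp add: add.commute[of _ 1] ennreal_add_left_cancel)
  define h where "h x = f x powr q - f x" for x
  have "(\<integral>\<^sup>+x. ennreal (- h x) \<partial>nu) \<le> (\<integral>\<^sup>+x. ennreal (q - 1) * ennreal (1 - f x) \<partial>nu)"
  proof (rule nn_integral_mono)
    fix x
    have "- h x \<le> (q - 1) * (1 - f x)" using powr_tangent[OF f0 q, of x] unfolding h_def by argo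
    then show "ennreal (- h x) \<le> ennreal (q - 1) * ennreal (1 - f x)"
      using q by (subst ennreal_mult'[symmetric]) (auto intro: ennreal_leI)
  qed
  also have "\<dots> = ennreal (q - 1) * b" unfolding b_def by (subst nn_integral_cmult) auto
  also have "\<dots> = (\<integral>\<^sup>+x. ennreal (q - 1) * ennreal (f x - 1) \<partial>nu)"
    unfolding ab[symmetric] a_def by (subst nn_integral_cmult) auto
  also have "\<dots> \<le> (\<integral>\<^sup>+x. ennreal (h x) \<partial>nu)"
  proof (rule nn_integral_mono)
    fix x
    have "h x \<ge> (q - 1) * (f x - 1)" using powr_tangent[OF f0 q, of x] unfolding h_def by argo
    then show "ennreal (q - 1) * ennreal (f x - 1) \<le> ennreal (h x)"
      using q by (subst ennreal_mult'[symmetric]) (auto intro: ennreal_leI)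
  qed
  finally have le: "(\<integral>\<^sup>+x. ennreal (- h x) \<partial>nu) \<le> (\<integral>\<^sup>+x. ennreal (h x) \<partial>nu)" .
  have "ext_integral nu h \<ge> 0"
    unfolding ext_integral_def
    by (rule ereal_diff_positive) (use le in \<open>simp add: less_eq_ennreal.rep_eq[symmetric]\<close>)
  moreover have "ereal (1 / (q - 1)) \<ge> 0" using q by simp
  ultimately have "ereal (1 / (q - 1)) * ext_integral nu h \<ge> 0" by (simp add: ereal_zero_le_0_iff)
  then show ?thesis using q ac unfolding tsallis_def h_def f_def by simp
qed
lemma bc_determines:
  fixes M N :: "'a::metric_space measure"
  assumes M: "finite_measure M" and N: "finite_measure N"
    and SM: "sets M = sets borel" and SN: "sets N = sets borel"
    and eq: "\<And>f :: 'a \<Rightarrow> real. continuous_on UNIV f \<Longrightarrow> bounded (range f) \<Longrightarrow>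
              (\<integral>x. f x \<partial>M) = (\<integral>x. f x \<partial>N)"
  shows "M = N"
proof -
  interpret M: finite_measure M by fact
  interpret N: finite_measure N by fact
  have spM: "space M = UNIV" using sets_eq_imp_space_eq[OF SM] by simp
  have spN: "space N = UNIV" using sets_eq_imp_space_eq[OF SN] by simp
  have closed_eq: "measure M F = measure N F" if F: "closed F" for F
  proof (cases "F = {}")
    case True then show ?thesis by simp
  next
    case False
    define s where "s n x = max 0 (1 - real n * infdist x F)" for n x
    have cont: "continuous_on UNIV (s n)" for n
      unfolding s_def by (intro continuous_intros)
    have bnd: "norm (s n x) \<le> 1" for n x
      unfolding s_def using infdist_nonneg[of x F] by auto
    have bd: "bounded (range (s n))" for n
      unfolding bounded_iff using bnd by blast
    have lim: "(\<lambda>n. s n x) \<longlonglongrightarrow> indicator F x" for x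
    proof (cases "x \<in> F")
      case True
      then show ?thesis by (simp add: s_def)
    next
      case xF: False
      then have d: "infdist x F > 0"
        using in_closed_iff_infdist_zero[OF F False] infdist_nonneg[of x F] by auto
      obtain n0 :: nat where "real n0 > 1 / infdist x F" using reals_Archimedean2 by blast
      then have "eventually (\<lambda>n. s n x = 0) sequentially"
        unfolding eventually_sequentially
      proof (intro exI[of _ n0] allI impI)
        fix n assume "n0 \<le> n" "real n0 > 1 / infdist x F"
        then have "real n > 1 / infdist x F" by (meson le_less_trans not_less of_nat_le_iff)
        then have "real n * infdist x F > 1" using d by (simp add: field_simps)
        then show "s n x = 0" by (simp add: s_def)
      qed
      then show ?thesis using xF by (simp add: tendsto_eventually)
    qed
    have smM[measurable]: "s n \<in> borel_measurable M" for n
      using borel_measurable_continuous_onI[OF cont] measurable_cong_sets[OF SM refl] by blast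
    have smN[measurable]: "s n \<in> borel_measurable N" for n
      using borel_measurable_continuous_onI[OF cont] measurable_cong_sets[OF SN refl] by blast
    have FM: "F \<in> sets M" using SM F by (simp add: borel_closed)
    have FN: "F \<in> sets N" using SN F by (simp add: borel_closed)
    have "(\<lambda>n. \<integral>x. s n x \<partial>M) \<longlonglongrightarrow> (\<integral>x. indicator F x \<partial>M)"
      by (rule integral_dominated_convergence[where w="\<lambda>x. 1"])
         (use FM lim bnd in auto)
    moreover have "(\<lambda>n. \<integral>x. s n x \<partial>N) \<longlonglongrightarrow> (\<integral>x. indicator F x \<partial>N)"
      by (rule integral_dominated_convergence[where w="\<lambda>x. 1"])
         (use FN lim bnd in auto)
    moreover have "(\<integral>x. s n x \<partial>M) = (\<integral>x. s n x \<partial>N)" for n using eq[OF cont bd] .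
    ultimately have "(\<integral>x. indicator F x \<partial>M) = ((\<integral>x. indicator F x \<partial>N) :: real)"
      using LIMSEQ_unique by auto
    then show ?thesis using FM FN by simp
  qed
  show ?thesis
  proof (rule measure_eqI_generator_eq[where E="Collect closed :: 'a set set" and \<Omega>=UNIV and A="\<lambda>_. UNIV"])
    show "Int_stable (Collect closed)" by (auto simp: Int_stable_def)
    show "Collect closed \<subseteq> Pow UNIV" by simp
    fix X :: "'a set" assume "X \<in> Collect closed"
    then have "closed X" by simp
    then show "emeasure M X = emeasure N X"
      using closed_eq[of X] SM SN borel_closed[of X]
      by (simp add: M.emeasure_eq_measure N.emeasure_eq_measure)
  next
    show "sets M = sigma_sets UNIV (Collect closed)"
      using SM by (simp add: borel_eq_closed)
    show "sets N = sigma_sets UNIV (Collect closed)"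
      using SN by (simp add: borel_eq_closed)
  qed (auto simp: M.emeasure_eq_measure)
qed

lemma lsc_integral:
  fixes c :: "'a::metric_space \<Rightarrow> real" and P :: "nat \<Rightarrow> 'a measure" and Q :: "'a measure"
  assumes cc: "continuous_on UNIV c" and c0: "\<And>z. c z \<ge> 0"
    and P: "\<And>k. prob_space (P k)" "\<And>k. sets (P k) = sets borel"
    and Q: "prob_space Q" "sets Q = sets borel"
    and nc: "narrow_conv P Q"
  shows "enn2ereal (\<integral>\<^sup>+z. ennreal (c z) \<partial>Q) \<le> liminf (\<lambda>k. enn2ereal (\<integral>\<^sup>+z. ennreal (c z) \<partial>P k))"
    (is "_ \<le> ?L")
proof -
  interpret Q: prob_space Q by fact
  define cN where "cN N x = min (c x) (real N)" for N x
  have cNc: "continuous_on UNIV (cN N)" for N unfolding cN_def using cc by (intro continuous_intros)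
  have cNb: "norm (cN N x) \<le> real N" for N x unfolding cN_def using c0[of x] by auto
  have cN0: "cN N x \<ge> 0" for N x unfolding cN_def using c0[of x] by auto
  have cNbd: "bounded (range (cN N))" for N unfolding bounded_iff using cNb by blast
  have cNQ[measurable]: "cN N \<in> borel_measurable Q" for N
    using borel_measurable_continuous_onI[OF cNc] measurable_cong_sets[OF Q(2) refl] by blast
  have cNP[measurable]: "cN N \<in> borel_measurable (P k)" for N k
    using borel_measurable_continuous_onI[OF cNc] measurable_cong_sets[OF P(2) refl] by blast
  have step: "ereal (\<integral>x. cN N x \<partial>Q) \<le> ?L" for N
  proof -
    have "(\<lambda>k. \<integral>x. cN N x \<partial>P k) \<longlonglongrightarrow> (\<integral>x. cN N x \<partial>Q)"
      using nc cNc cNbd unfolding narrow_conv_def by blast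
    then have "(\<lambda>k. ereal (\<integral>x. cN N x \<partial>P k)) \<longlonglongrightarrow> ereal (\<integral>x. cN N x \<partial>Q)" by simp
    then have "liminf (\<lambda>k. ereal (\<integral>x. cN N x \<partial>P k)) = ereal (\<integral>x. cN N x \<partial>Q)"
      by (intro lim_imp_Liminf) auto
    moreover have "liminf (\<lambda>k. ereal (\<integral>x. cN N x \<partial>P k)) \<le> ?L"
    proof (intro Liminf_mono always_eventually allI)
      fix k
      interpret Pk: prob_space "P k" by (rule P)
      have int: "integrable (P k) (cN N)"
        by (rule Pk.integrable_const_bound[where B="real N"]) (use cNb in auto)
      have "ennreal (\<integral>x. cN N x \<partial>P k) = (\<integral>\<^sup>+x. ennreal (cN N x) \<partial>P k)"
        by (rule nn_integral_eq_integral[symmetric]) (use int cN0 in auto)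
      also have "\<dots> \<le> (\<integral>\<^sup>+x. ennreal (c x) \<partial>P k)"
        by (intro nn_integral_mono ennreal_leI) (simp add: cN_def)
      finally have le: "ennreal (\<integral>x. cN N x \<partial>P k) \<le> (\<integral>\<^sup>+x. ennreal (c x) \<partial>P k)" .
      have nn: "(\<integral>x. cN N x \<partial>P k) \<ge> 0" using cN0 by simp
      show "ereal (\<integral>x. cN N x \<partial>P k) \<le> enn2ereal (\<integral>\<^sup>+z. ennreal (c z) \<partial>P k)"
        using le nn by (simp add: less_eq_ennreal.rep_eq)
    qed
    ultimately show ?thesis by simp
  qed
  have lim: "(\<lambda>N. \<integral>\<^sup>+x. ennreal (cN N x) \<partial>Q) \<longlonglongrightarrow> (\<integral>\<^sup>+x. ennreal (c x) \<partial>Q)"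
  proof (rule nn_integral_LIMSEQ)
    show "incseq (\<lambda>N x. ennreal (cN N x))"
      by (auto simp: incseq_def le_fun_def cN_def intro!: ennreal_leI)
    show "(\<lambda>x. ennreal (cN N x)) \<in> borel_measurable Q" for N by measurable
    fix x
    obtain n0 :: nat where "real n0 \<ge> c x" using real_arch_simple by blast
    then have "eventually (\<lambda>N. cN N x = c x) sequentially"
      unfolding eventually_sequentially cN_def
      by (intro exI[of _ n0]) (auto intro!: min_absorb1 elim: order_trans)
    then have "(\<lambda>N. cN N x) \<longlonglongrightarrow> c x" by (rule tendsto_eventually)
    then show "(\<lambda>N. ennreal (cN N x)) \<longlonglongrightarrow> ennreal (c x)" by (rule tendsto_ennrealI)
  qed
  have eqN: "enn2ereal (\<integral>\<^sup>+x. ennreal (cN N x) \<partial>Q) = ereal (\<integral>x. cN N x \<partial>Q)" for N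
  proof -
    have int: "integrable Q (cN N)"
      by (rule Q.integrable_const_bound[where B="real N"]) (use cNb in auto)
    have "(\<integral>\<^sup>+x. ennreal (cN N x) \<partial>Q) = ennreal (\<integral>x. cN N x \<partial>Q)"
      by (rule nn_integral_eq_integral) (use int cN0 in auto)
    moreover have "(\<integral>x. cN N x \<partial>Q) \<ge> 0" using cN0 by simp
    ultimately show ?thesis by simp
  qed
  from lim have "(\<lambda>N. enn2ereal (\<integral>\<^sup>+x. ennreal (cN N x) \<partial>Q)) \<longlonglongrightarrow> enn2ereal (\<integral>\<^sup>+x. ennreal (c x) \<partial>Q)"
    by simp
  then show ?thesis
    by (rule LIMSEQ_le_const2) (use step eqN in auto)
qed

lemma marginal_limit:
  fixes T :: "'c::metric_space \<Rightarrow> 'a::metric_space"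
    and P :: "nat \<Rightarrow> 'c measure" and Q :: "'c measure" and mu :: "'a measure"
  assumes Tc: "continuous_on UNIV T"
    and Q: "prob_space Q" "sets Q = sets borel"
    and P: "\<And>k. sets (P k) = sets borel"
    and mu: "prob_space mu" "sets mu = sets borel"
    and nc: "narrow_conv P Q"
    and fr: "frequently (\<lambda>k. distr (P k) mu T = mu) sequentially"
  shows "distr Q mu T = mu"
proof -
  have Tb: "T \<in> borel_measurable borel" by (rule borel_measurable_continuous_onI[OF Tc])
  have TQ: "T \<in> measurable Q mu"
    using Tb measurable_cong_sets[OF Q(2) mu(2)] by blast
  have TP: "T \<in> measurable (P k) mu" for k
    using Tb measurable_cong_sets[OF P mu(2)] by blast
  interpret Q: prob_space Q by fact
  have pd: "prob_space (distr Q mu T)" by (rule Q.prob_space_distr[OF TQ])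
  show ?thesis
  proof (rule bc_determines)
    show "finite_measure (distr Q mu T)" using pd by (simp add: prob_space.finite_measure)
    show "finite_measure mu" using mu(1) by (simp add: prob_space.finite_measure)
    show "sets (distr Q mu T) = sets borel" using mu(2) by simp
    show "sets mu = sets borel" by (rule mu(2))
    fix g :: "'a \<Rightarrow> real" assume gc: "continuous_on UNIV g" and gb: "bounded (range g)"
    have gm: "g \<in> borel_measurable mu"
      using borel_measurable_continuous_onI[OF gc] measurable_cong_sets[OF mu(2) refl] by blast
    have gTc: "continuous_on UNIV (\<lambda>z. g (T z))"
      using continuous_on_compose[OF Tc continuous_on_subset[OF gc subset_UNIV]] by (simp add: comp_def)
    have gTb: "bounded (range (\<lambda>z. g (T z)))"
      by (rule bounded_subset[OF gb]) auto
    have lim: "(\<lambda>k. \<integral>z. g (T z) \<partial>P k) \<longlonglongrightarrow> (\<integral>z. g (T z) \<partial>Q)"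
      using nc gTc gTb unfolding narrow_conv_def by blast
    have fr2: "frequently (\<lambda>k. (\<integral>z. g (T z) \<partial>P k) = (\<integral>x. g x \<partial>mu)) sequentially"
      using fr
    proof (rule frequently_elim1)
      fix k assume "distr (P k) mu T = mu"
      then have "(\<integral>x. g x \<partial>mu) = (\<integral>x. g x \<partial>distr (P k) mu T)" by simp
      also have "\<dots> = (\<integral>z. g (T z) \<partial>P k)" by (rule integral_distr[OF TP gm])
      finally show "(\<integral>z. g (T z) \<partial>P k) = (\<integral>x. g x \<partial>mu)" by simp
    qed
    have "(\<integral>z. g (T z) \<partial>Q) = (\<integral>x. g x \<partial>mu)"
    proof (rule ccontr)
      assume "(\<integral>z. g (T z) \<partial>Q) \<noteq> (\<integral>x. g x \<partial>mu)"
      from tendsto_imp_eventually_ne[OF lim this]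
      have "eventually (\<lambda>k. (\<integral>z. g (T z) \<partial>P k) \<noteq> (\<integral>x. g x \<partial>mu)) sequentially" .
      with fr2 show False by (simp add: frequently_def)
    qed
    then show "(\<integral>x. g x \<partial>distr Q mu T) = (\<integral>x. g x \<partial>mu)"
      using integral_distr[OF TQ gm] by simp
  qed
qed

theorem proposition3p1:
  fixes p q :: real
    and c :: "('a::polish_space \<times> 'b::polish_space) \<Rightarrow> real"
    and mu1 :: "'a measure" and mu2 :: "'b measure"
    and eps :: "nat \<Rightarrow> real"
    and pms :: "nat \<Rightarrow> ('a \<times> 'b) measure" and pm :: "('a \<times> 'b) measure"
  assumes "p \<ge> 1"
    and "continuous_on UNIV c" and "\<And>z. c z \<ge> 0"
    and "mu1 \<in> Pp p" and "mu2 \<in> Pp p"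
    and "q > 1"
    and "\<And>k. eps k > 0" and "eps \<longlonglongrightarrow> 0"
    and "\<And>k. pms k \<in> Pp p" and "pm \<in> Pp p"
    and "narrow_conv pms pm"
  shows "Fzero c mu1 mu2 pm \<le> liminf (\<lambda>k. Fk c q (eps k) mu1 mu2 (pms k))"
proof -
  note cc = assms(2) and c0 = assms(3) and nc = assms(11)
  have m1: "prob_space mu1" "sets mu1 = sets borel" using assms(4) by (auto simp: Pp_def)
  have m2: "prob_space mu2" "sets mu2 = sets borel" using assms(5) by (auto simp: Pp_def)
  have P: "prob_space (pms k)" "sets (pms k) = sets borel" for k using assms(9)[of k] by (auto simp: Pp_def)
  have Q: "prob_space pm" "sets pm = sets borel" using assms(10) by (auto simp: Pp_def)
  have prodS: "sets (mu1 \<Otimes>\<^sub>M mu2) = sets (borel :: ('a \<times> 'b) measure)"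
    proof -
    have "sets (mu1 \<Otimes>\<^sub>M mu2) = sets (borel \<Otimes>\<^sub>M borel)" by (rule sets_pair_measure_cong[OF m1(2) m2(2)])
    then show ?thesis by (simp only: borel_prod)
  qed
  have prodP: "prob_space (mu1 \<Otimes>\<^sub>M mu2)" by (rule prob_space_pair[OF m1(1) m2(1)])
  define G where "G k = enn2ereal (\<integral>\<^sup>+z. ennreal (c z) \<partial>pms k)" for k
  have FG: "G k \<le> Fk c q (eps k) mu1 mu2 (pms k)" for k
  proof (cases "pms k \<in> couplings mu1 mu2")
    case True
    have "tsallis q (pms k) (mu1 \<Otimes>\<^sub>M mu2) \<ge> 0"
      by (rule tsallis_nonneg[OF P(1) prodP]) (simp add: P(2) prodS)
    moreover have "ereal (eps k) \<ge> 0" using assms(7)[of k] by simp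
    ultimately have "ereal (eps k) * tsallis q (pms k) (mu1 \<Otimes>\<^sub>M mu2) \<ge> 0"
      by (simp add: ereal_zero_le_0_iff)
    then show ?thesis using True unfolding Fk_def G_def
      by (simp add: add_increasing2)
  next
    case False then show ?thesis unfolding Fk_def by simp
  qed
  show ?thesis
  proof (cases "pm \<in> couplings mu1 mu2")
    case True
    have "Fzero c mu1 mu2 pm = enn2ereal (\<integral>\<^sup>+z. ennreal (c z) \<partial>pm)"
      using True unfolding Fzero_def by simp
    also have "\<dots> \<le> liminf G"
      unfolding G_def by (rule lsc_integral[OF cc c0 P Q nc])
    also have "\<dots> \<le> liminf (\<lambda>k. Fk c q (eps k) mu1 mu2 (pms k))"
      by (intro Liminf_mono always_eventually allI FG)
    finally show ?thesis .
  next
    case False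
    have ev: "eventually (\<lambda>k. pms k \<notin> couplings mu1 mu2) sequentially"
    proof (rule ccontr)
      assume "\<not> ?thesis"
      then have fr: "frequently (\<lambda>k. pms k \<in> couplings mu1 mu2) sequentially"
        by (simp add: frequently_def)
      have "distr pm mu1 fst = mu1"
      proof (rule marginal_limit[OF _ Q P(2) m1 nc])
        show "continuous_on UNIV (fst :: 'a \<times> 'b \<Rightarrow> 'a)" by (intro continuous_intros)
        show "frequently (\<lambda>k. distr (pms k) mu1 fst = mu1) sequentially"
          using fr by (rule frequently_elim1) (simp add: couplings_def)
      qed
      moreover have "distr pm mu2 snd = mu2"
      proof (rule marginal_limit[OF _ Q P(2) m2 nc])
        show "continuous_on UNIV (snd :: 'a \<times> 'b \<Rightarrow> 'b)" by (intro continuous_intros)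
        show "frequently (\<lambda>k. distr (pms k) mu2 snd = mu2) sequentially"
          using fr by (rule frequently_elim1) (simp add: couplings_def)
      qed
      ultimately have "pm \<in> couplings mu1 mu2" using Q by (simp add: couplings_def)
      with False show False by simp
    qed
    then have "eventually (\<lambda>k. Fk c q (eps k) mu1 mu2 (pms k) = \<infinity>) sequentially"
      by (rule eventually_mono) (simp add: Fk_def)
    then have "liminf (\<lambda>k. Fk c q (eps k) mu1 mu2 (pms k)) = \<infinity>"
      by (intro lim_imp_Liminf tendsto_eventually) auto
    then show ?thesis by simp
  qed
qed

end
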